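(* Let $\lambda=2\cos(\pi/5)$ and let $H_5$ be the subgroup of $SL(2,\mathbb R)$ generated by $S=\begin{pmatrix}0&1\\-1&0\end{pmatrix}$ and $T=\begin{pmatrix}1&\lambda\\0&1\end{pmatrix}$. Let $p$ be an odd rational prime and set $a=2\lambda^2$, $c=p\lambda^3$. Then for every $m\in\mathbb Z$, $$\begin{pmatrix}1-acm\lambda & a^2m\lambda\\ -c^2m\lambda & 1+acm\lambda\end{pmatrix}\in H(m).$$
   Context: For $m\in\mathbb Z$, $H(m)=\{(a_{ij})\in H_5 : a_{11}-1,\ a_{22}-1,\ a_{12},\ a_{21}\in m\mathbb Z[\lambda]\}$. *)

theory Defs
  imports "HOL-Analysis.Analysis" "HOL-Computational_Algebra.Polynomial"
begin

definition lam :: real where "lam = 2 * cos (pi / 5)"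

definition mat2 :: "real \<Rightarrow> real \<Rightarrow> real \<Rightarrow> real \<Rightarrow> real^2^2" where
  "mat2 a b c d = (\<chi> i j. if i = 1 then (if j = 1 then a else b) else (if j = 1 then c else d))"

definition Smat :: "real^2^2" where "Smat = mat2 0 1 (-1) 0"
definition Tmat :: "real^2^2" where "Tmat = mat2 1 lam 0 1"

inductive_set H5 :: "(real^2^2) set" where
  H5_one: "mat 1 \<in> H5"
| H5_S: "Smat \<in> H5"
| H5_T: "Tmat \<in> H5"
| H5_mult: "A \<in> H5 \<Longrightarrow> B \<in> H5 \<Longrightarrow> A ** B \<in> H5"
| H5_inv: "A \<in> H5 \<Longrightarrow> matrix_inv A \<in> H5"

definition Zlam :: "real set" where
  "Zlam = {poly (map_poly of_int p) lam | p :: int poly. True}"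

definition mZlam :: "int \<Rightarrow> real set" where
  "mZlam m = {of_int m * x | x. x \<in> Zlam}"

definition Hm :: "int \<Rightarrow> (real^2^2) set" where
  "Hm m = {A \<in> H5. A$1$1 - 1 \<in> mZlam m \<and> A$2$2 - 1 \<in> mZlam m
                 \<and> A$1$2 \<in> mZlam m \<and> A$2$1 \<in> mZlam m}"

end

theory Submission
  imports Defs
begin

lemma lam_sq: "lam^2 = lam + 1"
proof -
  define c where "c = cos (pi/5)"
  have cpos: "c > 0" unfolding c_def using pi_gt_zero by (intro cos_gt_zero_pi) linarith+
  have "cos (3*(pi/5)) = - cos (2*(pi/5))"
  proof -
    have e: "3*(pi/5) = pi - 2*(pi/5)" by simp
    show ?thesis by (simp only: e cos_pi_minus)
  qed
  hence "4*c^3 - 3*c = -(2*c^2 - 1)" unfolding c_def cos_treble_cos cos_double_cos by simp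
  hence "(c+1)*(4*c^2 - 2*c - 1) = 0" by algebra
  hence "4*c^2 - 2*c - 1 = 0" using cpos by simp
  thus ?thesis unfolding lam_def c_def[symmetric] by algebra
qed

lemma mat2_mult: "mat2 a b c d ** mat2 e f g h = mat2 (a*e+b*g) (a*f+b*h) (c*e+d*g) (c*f+d*h)"
  unfolding mat2_def matrix_matrix_mult_def
  by (auto simp: vec_eq_iff UNIV_2 forall_2)

lemma mat1_eq: "(mat 1 :: real^2^2) = mat2 1 0 0 1"
  unfolding mat2_def mat_def by (auto simp: vec_eq_iff forall_2)

lemma mat2_cong: "a = a' \<Longrightarrow> b = b' \<Longrightarrow> c = c' \<Longrightarrow> d = d' \<Longrightarrow> mat2 a b c d = mat2 a' b' c' d'"
  by simp

lemma H5_inv': assumes "A \<in> H5" "A ** B = mat 1" "B ** A = mat 1" shows "B \<in> H5"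
proof -
  have ex: "\<exists>A'. A ** A' = mat 1 \<and> A' ** A = mat 1" using assms by blast
  define A' where "A' = matrix_inv A"
  have h: "A ** A' = mat 1 \<and> A' ** A = mat 1" unfolding A'_def matrix_inv_def
    by (rule someI_ex[OF ex])
  have "A' = A' ** (A ** B)" using assms by (simp add: matrix_mul_rid)
  also have "\<dots> = (A' ** A) ** B" by (simp add: matrix_mul_assoc)
  also have "\<dots> = B" using h by (simp add: matrix_mul_lid)
  finally have "B = matrix_inv A" unfolding A'_def by simp
  thus ?thesis using assms(1) H5_inv by simp
qed

definition Tp :: "int \<Rightarrow> real^2^2" where "Tp n = mat2 1 (of_int n * lam) 0 1"

lemma Tp_nat: "Tp (int n) \<in> H5"
proof (induction n)
  case 0
  then show ?case using H5_one by (simp add: Tp_def mat1_eq)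
next
  case (Suc n)
  have "Tp (int n) ** Tmat \<in> H5" using Suc H5_T H5_mult by blast
  moreover have "Tp (int n) ** Tmat = Tp (int (Suc n))"
    by (simp add: Tp_def Tmat_def mat2_mult distrib_right)
  ultimately show ?case by simp
qed

lemma Tp_H5: "Tp n \<in> H5"
proof (cases "n \<ge> 0")
  case True
  then obtain k where "n = int k" using nonneg_int_cases by blast
  then show ?thesis using Tp_nat by simp
next
  case False
  define k where "k = nat (-n)"
  have k: "n = - int k" using False unfolding k_def by simp
  show ?thesis
    apply (rule H5_inv'[OF Tp_nat[of k]])
    by (simp_all add: k Tp_def mat2_mult mat1_eq)
qed


lemma mat2_entries: "mat2 a b c d $1$1 = a" "mat2 a b c d $1$2 = b"
  "mat2 a b c d $2$1 = c" "mat2 a b c d $2$2 = d"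
  by (simp_all add: mat2_def)

lemma monom_Zlam: "of_int m * (of_int c * lam^n) \<in> mZlam m"
proof -
  have "poly (map_poly of_int (monom c n)) lam = of_int c * lam^n"
    by (simp add: map_poly_monom poly_monom)
  hence "of_int c * lam^n \<in> Zlam" unfolding Zlam_def mem_Collect_eq by (intro exI[of _ "monom c n"]) simp
  thus ?thesis unfolding mZlam_def by blast
qed

definition Wm :: "int \<Rightarrow> real^2^2" where
  "Wm k = Smat ** Tp 1 ** Smat ** Tp 1 ** Smat ** Tp (-1) ** Smat ** Tp (-1) ** Smat ** Tp k ** Smat"

lemma Wm_H5: "Wm k \<in> H5"
  unfolding Wm_def by (intro H5_mult H5_S Tp_H5)

lemma Wm_eq: "Wm k = mat2 (-(2+2* of_int k) - (1+3* of_int k)*lam) (1+2*lam)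
   ((2* of_int k+1)*(1+2*lam)) (-2*(1+lam))"
  unfolding Wm_def Smat_def Tp_def mat2_mult
  apply (rule mat2_cong)
  subgoal using lam_sq by (simp only: of_int_1 of_int_minus) algebra
  subgoal using lam_sq by (simp only: of_int_1 of_int_minus) algebra
  subgoal using lam_sq by (simp only: of_int_1 of_int_minus) algebra
  subgoal using lam_sq by (simp only: of_int_1 of_int_minus) algebra
  done


theorem lemma3p3:
  fixes p :: nat and a c :: real
  assumes "prime p" and "odd p"
    and "a = 2 * lam ^ 2" and "c = real p * lam ^ 3"
  shows "\<forall>m::int. mat2 (1 - a * c * of_int m * lam) (a^2 * of_int m * lam)
                     (- (c^2 * of_int m * lam)) (1 + a * c * of_int m * lam) \<in> Hm m"
proof
  fix m :: int
  obtain q where pq: "p = 2*q+1" using assms(2) oddE by blast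
  define k where "k = int q"
  have rp: "real p = 2 * of_int k + 1" unfolding k_def pq by simp
  define G where "G = mat2 (-2*lam^2) (-(1+2*lam)) (-((2* of_int k+1)*(1+2*lam)))
      (-(2+2* of_int k) - (1+3* of_int k)*lam)"
  have WG: "Wm k ** G = mat 1"
    unfolding Wm_eq G_def mat1_eq mat2_mult
    apply (rule mat2_cong)
    subgoal using lam_sq by (algebra | simp add: algebra_simps | (simp add: algebra_simps, algebra))
    subgoal using lam_sq by (algebra | simp add: algebra_simps | (simp add: algebra_simps, algebra))
    subgoal using lam_sq by (algebra | simp add: algebra_simps | (simp add: algebra_simps, algebra))
    subgoal using lam_sq by (algebra | simp add: algebra_simps | (simp add: algebra_simps, algebra))
    done
  have GW: "G ** Wm k = mat 1"
    unfolding Wm_eq G_def mat1_eq mat2_mult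
    apply (rule mat2_cong)
    subgoal using lam_sq by (algebra | simp add: algebra_simps | (simp add: algebra_simps, algebra))
    subgoal using lam_sq by (algebra | simp add: algebra_simps | (simp add: algebra_simps, algebra))
    subgoal using lam_sq by (algebra | simp add: algebra_simps | (simp add: algebra_simps, algebra))
    subgoal using lam_sq by (algebra | simp add: algebra_simps | (simp add: algebra_simps, algebra))
    done
  have GH: "G \<in> H5" by (rule H5_inv'[OF Wm_H5 WG GW])
  have PH: "G ** Tp m ** Wm k \<in> H5" using GH Tp_H5 Wm_H5 by (intro H5_mult)
  let ?M = "mat2 (1 - a * c * of_int m * lam) (a^2 * of_int m * lam)
                     (- (c^2 * of_int m * lam)) (1 + a * c * of_int m * lam)"
  have eq: "?M = G ** Tp m ** Wm k"
    unfolding Wm_eq G_def Tp_def mat2_mult assms(3,4) rp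
    apply (rule mat2_cong)
    subgoal using lam_sq by (algebra | simp add: algebra_simps | (simp add: algebra_simps, algebra))
    subgoal using lam_sq by (algebra | simp add: algebra_simps | (simp add: algebra_simps, algebra))
    subgoal using lam_sq by (algebra | simp add: algebra_simps | (simp add: algebra_simps, algebra))
    subgoal using lam_sq by (algebra | simp add: algebra_simps | (simp add: algebra_simps, algebra))
    done
  have e1: "1 - a * c * of_int m * lam - 1 = of_int m * (of_int (-2 * int p) * lam^6)"
    unfolding assms(3,4) by (simp add: algebra_simps power_numeral_reduce)
  have e2: "1 + a * c * of_int m * lam - 1 = of_int m * (of_int (2 * int p) * lam^6)"
    unfolding assms(3,4) by (simp add: algebra_simps power_numeral_reduce)
  have e3: "a^2 * of_int m * lam = of_int m * (of_int 4 * lam^5)"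
    unfolding assms(3,4) by (simp add: algebra_simps power_numeral_reduce)
  have e4: "- (c^2 * of_int m * lam) = of_int m * (of_int (- ((int p)^2)) * lam^7)"
    unfolding assms(3,4) by (simp add: algebra_simps power_numeral_reduce)
  show "?M \<in> Hm m"
    unfolding Hm_def mem_Collect_eq mat2_entries
    using PH eq e1 e2 e3 e4 monom_Zlam by metis
qed

end
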